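(* Let $\Gamma$ be a single-player extensive-form game without chance nodes, and let $\mathscr C$ be the class of games that share the same game tree and infoset partition as $\Gamma$ (with arbitrary nonnegative utilities). Then $$\mathrm{VoR}^{\mathrm{opt}}(\mathscr C)=\max_{z\in\mathcal Z}\frac{1}{\alpha(z)}.$$
   Context: A single-player extensive-form game without chance nodes consists of a finite rooted tree (nodes $\mathcal H$, leaves $\mathcal Z$, actions $A_h$), all nonterminal nodes belonging to Player 1, a utility $u_1:\mathcal Z\to\mathbb R_{\ge0}$, and a partition $\mathcal I_1$ of nonterminal nodes into infosets with common action sets $A_I$. For a node $h$ with root-to-$h$ path $(h_0,\dots,h_{d-1})$, $\mathrm{obs}_1(h)=(I_k,a_k)_k$ lists infosets of and actions at the $h_k$. $\mathrm{pr}_1(\Gamma)$ has the same tree and utilities, with each infoset partitioned into classes of $h\sim h'\iff\mathrm{obs}_1(h)=\mathrm{obs}_1(h')$. $u_1(\mathrm{opt}(\cdot))$ is the maximum expected utility over behavioral strategies; $\mathrm{VoR}^{\mathrm{opt}}(\Gamma)=u_1(\mathrm{opt}(\mathrm{pr}_1(\Gamma)))/u_1(\mathrm{opt}(\Gamma))$ and $\mathrm{VoR}^{\mathrm{opt}}(\mathscr C)=\sup_{\Gamma'\in\mathscr C}\mathrm{VoR}^{\mathrm{opt}}(\Gamma')$. For $z\in\mathcal Z$ with path infosets/actions $(I_k,a_k)$ and $I\in\mathcal I_1$, $a\in A_I$: $n_z(I)=|\{k:I_k=I\}|$, $n_z(a)=|\{k:I_k=I,a_k=a\}|$, $p_z(a)=n_z(a)/n_z(I)$,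 $\alpha(z)=\prod_{I:n_z(I)>1}\prod_{a\in A_I:n_z(a)>0}p_z(a)^{n_z(a)}$. *)

theory Defs
  imports Complex_Main "HOL-Library.Extended_Real"
begin

text \<open>Game trees: nodes are the action sequences from the root (the root is the empty list).
  A tree is a finite, nonempty, prefix-closed set of such sequences; the child of h via
  action a is h @ [a].\<close>

definition game_tree :: "'a list set \<Rightarrow> bool" where
  "game_tree H \<longleftrightarrow> finite H \<and> [] \<in> H \<and> (\<forall>h a. h @ [a] \<in> H \<longrightarrow> h \<in> H)"

definition acts :: "'a list set \<Rightarrow> 'a list \<Rightarrow> 'a set" where
  "acts H h = {a. h @ [a] \<in> H}"

definition leaves :: "'a list set \<Rightarrow> 'a list set" where
  "leaves H = {h \<in> H. acts H h = {}}"

definition nonterminals :: "'a list set \<Rightarrow> 'a list set" where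
  "nonterminals H = H - leaves H"

text \<open>An infoset partition of the nonterminal nodes is given by a labelling function
  (the infosets are its fibres on the nonterminal nodes); nodes of one infoset share
  the same action set.\<close>

definition infoset_partition :: "'a list set \<Rightarrow> ('a list \<Rightarrow> 'i) \<Rightarrow> bool" where
  "infoset_partition H infs \<longleftrightarrow>
     (\<forall>h\<in>nonterminals H. \<forall>h'\<in>nonterminals H. infs h = infs h' \<longrightarrow> acts H h = acts H h')"

definition strategies :: "'a list set \<Rightarrow> ('a list \<Rightarrow> 'i) \<Rightarrow> ('i \<Rightarrow> 'a \<Rightarrow> real) set" where
  "strategies H infs = {\<sigma>. \<forall>h\<in>nonterminals H.
      (\<forall>a\<in>acts H h. \<sigma> (infs h) a \<ge> 0) \<and> (\<Sum>a\<in>acts H h. \<sigma> (infs h) a) = 1}"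

definition reach :: "('a list \<Rightarrow> 'i) \<Rightarrow> ('i \<Rightarrow> 'a \<Rightarrow> real) \<Rightarrow> 'a list \<Rightarrow> real" where
  "reach infs \<sigma> z = (\<Prod>k<length z. \<sigma> (infs (take k z)) (z ! k))"

definition exp_util ::
  "'a list set \<Rightarrow> ('a list \<Rightarrow> 'i) \<Rightarrow> ('a list \<Rightarrow> real) \<Rightarrow> ('i \<Rightarrow> 'a \<Rightarrow> real) \<Rightarrow> real" where
  "exp_util H infs u \<sigma> = (\<Sum>z\<in>leaves H. reach infs \<sigma> z * u z)"

definition opt_val :: "'a list set \<Rightarrow> ('a list \<Rightarrow> 'i) \<Rightarrow> ('a list \<Rightarrow> real) \<Rightarrow> real" where
  "opt_val H infs u = (SUP \<sigma>\<in>strategies H infs. exp_util H infs u \<sigma>)"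

definition obs :: "('a list \<Rightarrow> 'i) \<Rightarrow> 'a list \<Rightarrow> ('i \<times> 'a) list" where
  "obs infs h = map (\<lambda>k. (infs (take k h), h ! k)) [0..<length h]"

text \<open>pr_1(Gamma): each infoset is split into the classes of equal obs_1.\<close>

definition pr1 :: "('a list \<Rightarrow> 'i) \<Rightarrow> 'a list \<Rightarrow> 'i \<times> ('i \<times> 'a) list" where
  "pr1 infs h = (infs h, obs infs h)"

definition nI :: "('a list \<Rightarrow> 'i) \<Rightarrow> 'a list \<Rightarrow> 'i \<Rightarrow> nat" where
  "nI infs z I = card {k. k < length z \<and> infs (take k z) = I}"

definition na :: "('a list \<Rightarrow> 'i) \<Rightarrow> 'a list \<Rightarrow> 'i \<Rightarrow> 'a \<Rightarrow> nat" where
  "na infs z I a = card {k. k < length z \<and> infs (take k z) = I \<and> z ! k = a}"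

definition alpha :: "'a list set \<Rightarrow> ('a list \<Rightarrow> 'i) \<Rightarrow> 'a list \<Rightarrow> real" where
  "alpha H infs z =
     (\<Prod>I\<in>{I. nI infs z I > 1}.
        \<Prod>a\<in>{a \<in> acts H (take (LEAST k. k < length z \<and> infs (take k z) = I) z). na infs z I a > 0}.
          (real (na infs z I a) / real (nI infs z I)) ^ na infs z I a)"

end

theory Submission
  imports Defs
begin


lemma gt_prefix:
  assumes "game_tree H" "h @ t \<in> H" shows "h \<in> H"
  using assms(2)
proof (induction t arbitrary: h rule: rev_induct)
  case Nil then show ?case by simp
next
  case (snoc x xs)
  then have "(h @ xs) @ [x] \<in> H" by simp
  then have "h @ xs \<in> H" using assms(1) unfolding game_tree_def by blast
  then show ?case using snoc.IH by blast
qed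

lemma gt_take:
  assumes "game_tree H" "z \<in> H" shows "take k z \<in> H"
  using gt_prefix[OF assms(1), of "take k z" "drop k z"] assms(2) by simp

lemma gt_take_nt:
  assumes "game_tree H" "z \<in> H" "k < length z"
  shows "take k z \<in> nonterminals H" "z ! k \<in> acts H (take k z)"
proof -
  have e: "take k z @ [z ! k] = take (Suc k) z"
    using assms(3) by (simp add: take_Suc_conv_app_nth)
  show a: "z ! k \<in> acts H (take k z)"
    unfolding acts_def using gt_take[OF assms(1,2), of "Suc k"] e by simp
  show "take k z \<in> nonterminals H"
    using a gt_take[OF assms(1,2), of k] unfolding nonterminals_def leaves_def by auto
qed

lemma finite_acts:
  assumes "game_tree H" shows "finite (acts H h)"
proof -
  have "acts H h = (\<lambda>a. h @ [a]) -` H" unfolding acts_def by auto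
  moreover have "finite ((\<lambda>a. h @ [a]) -` H)"
    by (rule finite_vimageI) (use assms in \<open>auto simp: game_tree_def inj_on_def\<close>)
  ultimately show ?thesis by simp
qed

lemma finite_leaves: "game_tree H \<Longrightarrow> finite (leaves H)"
  unfolding game_tree_def leaves_def by auto

lemma leaves_nonempty:
  assumes "game_tree H" shows "leaves H \<noteq> {}"
proof -
  have fin: "finite H" and ne: "H \<noteq> {}" using assms unfolding game_tree_def by auto
  obtain h where h: "h \<in> H" "\<forall>h'\<in>H. length h' \<le> length h"
  proof -
    have "Max (length ` H) \<in> length ` H" using fin ne by (intro Max_in) auto
    then obtain h where "h \<in> H" "length h = Max (length ` H)" by auto
    moreover have "\<forall>h'\<in>H. length h' \<le> Max (length ` H)" using fin by auto
    ultimately show ?thesis using that by metis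
  qed
  have "acts H h = {}" unfolding acts_def using h(2) by fastforce
  then show ?thesis using h(1) unfolding leaves_def by auto
qed

lemma reach_nonneg:
  assumes "game_tree H" "\<sigma> \<in> strategies H lab" "z \<in> H"
  shows "reach lab \<sigma> z \<ge> 0"
  unfolding reach_def
  using gt_take_nt[OF assms(1,3)] assms(2) unfolding strategies_def
  by (intro prod_nonneg) auto

lemma reach_snoc: "reach lab \<sigma> (h @ [a]) = reach lab \<sigma> h * \<sigma> (lab h) a"
proof -
  have "(\<Prod>k<length h. \<sigma> (lab (take k (h @ [a]))) ((h @ [a]) ! k)) = (\<Prod>k<length h. \<sigma> (lab (take k h)) (h ! k))"
    by (rule prod.cong) (auto simp: nth_append)
  then show ?thesis unfolding reach_def by (simp add: lessThan_Suc)
qed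

lemma reach_Nil: "reach lab \<sigma> [] = 1"
  unfolding reach_def by simp



lemma reach_sum_sub:
  assumes gt: "game_tree H" and st: "\<sigma> \<in> strategies H lab"
  shows "h \<in> H \<Longrightarrow> (\<Sum>z\<in>{z\<in>leaves H. \<exists>t. z = h @ t}. reach lab \<sigma> z) = reach lab \<sigma> h"
proof (induction "Max (length ` H) - length h" arbitrary: h rule: less_induct)
  case less
  define B where "B = Max (length ` H)"
  have fin: "finite H" using gt unfolding game_tree_def by auto
  have lenB: "length x \<le> B" if "x \<in> H" for x unfolding B_def using fin that by auto
  show ?case
  proof (cases "h \<in> leaves H")
    case True
    have "{z\<in>leaves H. \<exists>t. z = h @ t} = {h}"
    proof (auto simp: True)
      fix t assume tl: "h @ t \<in> leaves H"
      show "t = []"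
      proof (rule ccontr)
        assume "t \<noteq> []"
        then have "h @ [hd t] @ tl t \<in> H" using tl unfolding leaves_def by simp
        then have "h @ [hd t] \<in> H" using gt_prefix[OF gt, of "h @ [hd t]" "tl t"] by simp
        then show False using True unfolding leaves_def acts_def by auto
      qed
    qed
    then show ?thesis by simp
  next
    case False
    with less.prems have nt: "h \<in> nonterminals H" unfolding nonterminals_def by auto
    define L where "L a = {z\<in>leaves H. \<exists>t. z = (h @ [a]) @ t}" for a
    have eq: "{z\<in>leaves H. \<exists>t. z = h @ t} = (\<Union>a\<in>acts H h. L a)"
    proof (auto simp: L_def)
      fix t assume tl: "h @ t \<in> leaves H"
      have "t \<noteq> []" using tl False by auto
      then have "h @ [hd t] @ tl t \<in> H" using tl unfolding leaves_def by simp
      then have "h @ [hd t] \<in> H" using gt_prefix[OF gt, of "h @ [hd t]" "tl t"] by simp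
      then show "\<exists>a\<in>acts H h. \<exists>ta. t = a # ta" using \<open>t \<noteq> []\<close> unfolding acts_def
        by (intro bexI[of _ "hd t"]) (auto intro: exI[of _ "tl t"])
    qed
    have "(\<Sum>z\<in>{z\<in>leaves H. \<exists>t. z = h @ t}. reach lab \<sigma> z) = (\<Sum>a\<in>acts H h. \<Sum>z\<in>L a. reach lab \<sigma> z)"
      unfolding eq
      by (rule sum.UNION_disjoint) (auto simp: finite_acts[OF gt] L_def finite_leaves[OF gt])
    also have "\<dots> = (\<Sum>a\<in>acts H h. reach lab \<sigma> (h @ [a]))"
    proof (rule sum.cong[OF refl])
      fix a assume a: "a \<in> acts H h"
      then have ha: "h @ [a] \<in> H" unfolding acts_def by auto
      have "length (h @ [a]) \<le> B" using lenB[OF ha] .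
      then have "Max (length ` H) - length (h @ [a]) < Max (length ` H) - length h"
        unfolding B_def by simp
      then show "(\<Sum>z\<in>L a. reach lab \<sigma> z) = reach lab \<sigma> (h @ [a])"
        unfolding L_def using less.hyps[OF _ ha] by blast
    qed
    also have "\<dots> = reach lab \<sigma> h * (\<Sum>a\<in>acts H h. \<sigma> (lab h) a)"
      by (simp add: reach_snoc sum_distrib_left)
    also have "\<dots> = reach lab \<sigma> h" using st nt unfolding strategies_def by auto
    finally show ?thesis .
  qed
qed

lemma reach_sum:
  assumes gt: "game_tree H" and st: "\<sigma> \<in> strategies H lab"
  shows "(\<Sum>z\<in>leaves H. reach lab \<sigma> z) = 1"
proof -
  have "[] \<in> H" using gt unfolding game_tree_def by auto
  from reach_sum_sub[OF gt st this] show ?thesis by (simp add: reach_Nil)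
qed

lemma exp_util_le:
  assumes gt: "game_tree H" and st: "\<sigma> \<in> strategies H lab" and M: "\<forall>z\<in>leaves H. u z \<le> M"
  shows "exp_util H lab u \<sigma> \<le> M"
proof -
  have "exp_util H lab u \<sigma> \<le> (\<Sum>z\<in>leaves H. reach lab \<sigma> z * M)"
    unfolding exp_util_def
    by (rule sum_mono) (use M reach_nonneg[OF gt st] in \<open>auto simp: leaves_def intro: mult_left_mono\<close>)
  also have "\<dots> = M" using reach_sum[OF gt st] by (simp add: sum_distrib_right[symmetric])
  finally show ?thesis .
qed

lemma opt_le:
  assumes gt: "game_tree H" and st: "\<sigma>0 \<in> strategies H lab" and M: "\<forall>z\<in>leaves H. u z \<le> M"
  shows "opt_val H lab u \<le> M"
  unfolding opt_val_def
  by (rule cSUP_least) (use st exp_util_le[OF gt _ M] in auto)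

lemma opt_ge:
  assumes gt: "game_tree H" and st: "\<sigma> \<in> strategies H lab"
    and u: "\<forall>z\<in>leaves H. u z \<ge> 0" and z: "z \<in> leaves H"
  shows "reach lab \<sigma> z * u z \<le> opt_val H lab u"
proof -
  have bdd: "bdd_above ((\<lambda>\<sigma>. exp_util H lab u \<sigma>) ` strategies H lab)"
    using exp_util_le[OF gt _, of _ lab u "Max (u ` leaves H)"] finite_leaves[OF gt]
    by (intro bdd_aboveI[of _ "Max (u ` leaves H)"]) auto
  have "reach lab \<sigma> z * u z \<le> exp_util H lab u \<sigma>"
    unfolding exp_util_def
    by (rule member_le_sum) (use z u reach_nonneg[OF gt st] finite_leaves[OF gt] in \<open>auto simp: leaves_def\<close>)
  also have "\<dots> \<le> opt_val H lab u" unfolding opt_val_def by (rule cSUP_upper[OF st bdd])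
  finally show ?thesis .
qed



lemma map_snd_obs[simp]: "map snd (obs infs h) = h"
  unfolding obs_def by (simp add: comp_def map_nth)

lemma path_strategy:
  assumes gt: "game_tree H" and zH: "z \<in> H"
  shows "\<exists>\<sigma>\<in>strategies H (pr1 infs). reach (pr1 infs) \<sigma> z = 1"
proof -
  define \<sigma> where "\<sigma> l a = (let h' = map snd (snd l) in
     if (\<exists>k<length z. take k z = h') then (if a = z ! length h' then 1 else 0)
     else (if a = (SOME a. a \<in> acts H h') then 1 else (0::real)))" for l :: "'b \<times> ('b \<times> 'a) list" and a
  have "\<sigma> \<in> strategies H (pr1 infs)"
    unfolding strategies_def
  proof (intro CollectI ballI conjI)
    fix h assume h: "h \<in> nonterminals H"
    show "0 \<le> \<sigma> (pr1 infs h) a" if "a \<in> acts H h" for a unfolding \<sigma>_def Let_def by auto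
    show "(\<Sum>a\<in>acts H h. \<sigma> (pr1 infs h) a) = 1"
    proof (cases "\<exists>k<length z. take k z = h")
      case True
      then obtain k where k: "k < length z" "take k z = h" by auto
      then have lh: "length h = k" by auto
      have "z ! k \<in> acts H h" using gt_take_nt[OF gt zH k(1)] k by simp
      then show ?thesis using True unfolding \<sigma>_def Let_def pr1_def
        by (simp add: finite_acts[OF gt] lh)
    next
      case False
      have "acts H h \<noteq> {}" using h unfolding nonterminals_def leaves_def by auto
      then have "(SOME a. a \<in> acts H h) \<in> acts H h" by (simp add: some_in_eq)
      moreover have "\<sigma> (pr1 infs h) a = (if a = (SOME a. a \<in> acts H h) then 1 else 0)" for a
        using False unfolding \<sigma>_def Let_def pr1_def by auto
      ultimately show ?thesis by (simp add: finite_acts[OF gt])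
    qed
  qed
  moreover have "reach (pr1 infs) \<sigma> z = 1"
    unfolding reach_def
    by (rule prod.neutral) (auto simp: \<sigma>_def pr1_def map_snd_obs Let_def min_def)
  ultimately show ?thesis by blast
qed



lemma sum_group_div:
  fixes c :: "'b \<Rightarrow> real"
  assumes "finite K"
  shows "(\<Sum>k\<in>K. c (g k) / real (card {j\<in>K. g j = g k})) = (\<Sum>y\<in>g`K. c y)"
proof -
  have "(\<Sum>k\<in>K. c (g k) / real (card {j\<in>K. g j = g k}))
      = (\<Sum>y\<in>g`K. \<Sum>k\<in>{k. k \<in> K \<and> g k = y}. c (g k) / real (card {j\<in>K. g j = g k}))"
    by (rule sum.image_gen[OF assms])
  also have "\<dots> = (\<Sum>y\<in>g`K. c y)"
  proof (rule sum.cong[OF refl])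
    fix y assume y: "y \<in> g ` K"
    have "(\<Sum>k\<in>{k. k \<in> K \<and> g k = y}. c (g k) / real (card {j\<in>K. g j = g k}))
        = (\<Sum>k\<in>{k. k \<in> K \<and> g k = y}. c y / real (card {j\<in>K. g j = y}))"
      by (rule sum.cong) auto
    also have "\<dots> = real (card {j\<in>K. g j = y}) * (c y / real (card {j\<in>K. g j = y}))"
      by simp
    also have "card {j\<in>K. g j = y} > 0" using y assms by (auto simp: card_gt_0_iff)
    then have "real (card {j\<in>K. g j = y}) * (c y / real (card {j\<in>K. g j = y})) = c y"
      by simp
    finally show "(\<Sum>k\<in>{k. k \<in> K \<and> g k = y}. c (g k) / real (card {j\<in>K. g j = g k})) = c y" .
  qed
  finally show ?thesis .
qed

context
  fixes H :: "'a list set" and infs :: "'a list \<Rightarrow> 'i" and z :: "'a list"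
  assumes gt: "game_tree H" and ip: "infoset_partition H infs" and zH: "z \<in> H"
begin

definition "Ik k = infs (take k z)"
definition "qq k = real (na infs z (Ik k) (z ! k)) / real (nI infs z (Ik k))"

lemma na_eq: "na infs z I a = card {k. k < length z \<and> Ik k = I \<and> z ! k = a}"
  unfolding na_def Ik_def by simp
lemma nI_eq: "nI infs z I = card {k. k < length z \<and> Ik k = I}"
  unfolding nI_def Ik_def by simp

lemma na_pos: "k < length z \<Longrightarrow> na infs z (Ik k) (z ! k) \<ge> 1"
proof -
  assume k: "k < length z"
  have "card {j. j < length z \<and> Ik j = Ik k \<and> z ! j = z ! k} > 0"
    using k by (subst card_gt_0_iff) auto
  then show ?thesis unfolding na_eq by linarith
qed

lemma na_le: "na infs z I a \<le> nI infs z I"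
  unfolding na_eq nI_eq by (rule card_mono) auto

lemma qq_pos: "k < length z \<Longrightarrow> qq k > 0"
  unfolding qq_def using na_pos[of k] na_le[of "Ik k" "z ! k"] by auto

lemma acts_same:
  assumes "k < length z" "h \<in> nonterminals H" "infs h = Ik k"
  shows "acts H h = acts H (take k z)"
  using ip assms gt_take_nt[OF gt zH assms(1)] unfolding infoset_partition_def Ik_def by blast

lemma ak_acts: "k < length z \<Longrightarrow> z ! k \<in> acts H (take k z)"
  using gt_take_nt[OF gt zH] by blast
lemma tk_nt: "k < length z \<Longrightarrow> take k z \<in> nonterminals H"
  using gt_take_nt[OF gt zH] by blast

lemma prod_qq_pos: "(\<Prod>k<length z. qq k) > 0"
  using qq_pos by (intro prod_pos) auto

lemma alpha_eq: "alpha H infs z = (\<Prod>k<length z. qq k)"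
proof -
  define n where "n = length z"
  define pr where "pr k = (Ik k, z ! k)" for k
  define P where "P = pr ` {..<n}"
  define f where "f p = (real (na infs z (fst p) (snd p)) / real (nI infs z (fst p))) ^ na infs z (fst p) (snd p)" for p
  define S where "S = {I. nI infs z I > 1}"
  define A where "A I = {a \<in> acts H (take (LEAST k. k < length z \<and> infs (take k z) = I) z). na infs z I a > 0}" for I
  have finP: "finite P" unfolding P_def by simp
  have "(\<Prod>k<n. qq k) = (\<Prod>p\<in>P. \<Prod>k\<in>{k. k \<in> {..<n} \<and> pr k = p}. qq k)"
    unfolding P_def by (rule prod.image_gen) simp
  also have "\<dots> = (\<Prod>p\<in>P. f p)"
  proof (rule prod.cong[OF refl])
    fix p assume "p \<in> P"
    have "(\<Prod>k\<in>{k. k \<in> {..<n} \<and> pr k = p}. qq k) = (\<Prod>k\<in>{k. k \<in> {..<n} \<and> pr k = p}.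
        real (na infs z (fst p) (snd p)) / real (nI infs z (fst p)))"
      by (rule prod.cong) (auto simp: qq_def pr_def)
    also have "\<dots> = f p" unfolding f_def
      by (cases p) (simp add: na_eq n_def pr_def)
    finally show "(\<Prod>k\<in>{k. k \<in> {..<n} \<and> pr k = p}. qq k) = f p" .
  qed
  also have "\<dots> = (\<Prod>p\<in>Sigma S A. f p)"
  proof (rule prod.mono_neutral_right[OF finP])
    show "Sigma S A \<subseteq> P"
    proof
      fix p assume "p \<in> Sigma S A"
      then obtain I a where p: "p = (I, a)" "na infs z I a > 0" unfolding A_def by auto
      then obtain k where "k < n" "Ik k = I" "z ! k = a" unfolding na_eq n_def
        by (metis (mono_tags, lifting) card.empty empty_Collect_eq less_irrefl)
      then show "p \<in> P" unfolding P_def pr_def p by auto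
    qed
    show "\<forall>p\<in>P - Sigma S A. f p = 1"
    proof
      fix p assume p: "p \<in> P - Sigma S A"
      then obtain k where k: "k < n" "p = (Ik k, z ! k)" unfolding P_def pr_def by auto
      have napos: "na infs z (Ik k) (z ! k) > 0" using na_pos[of k] k by (simp add: n_def)
      have "\<not> nI infs z (Ik k) > 1"
      proof
        assume gt1: "nI infs z (Ik k) > 1"
        define k' where "k' = (LEAST j. j < length z \<and> infs (take j z) = Ik k)"
        have k': "k' < length z \<and> infs (take k' z) = Ik k"
          unfolding k'_def by (rule LeastI[of _ k]) (use k in \<open>simp add: n_def Ik_def\<close>)
        have "acts H (take k' z) = acts H (take k z)"
          by (rule acts_same) (use k k' tk_nt in \<open>auto simp: n_def\<close>)
        then have "z ! k \<in> A (Ik k)" unfolding A_def k'_def[symmetric]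
          using ak_acts[of k] k napos by (simp add: n_def)
        then have "p \<in> Sigma S A" using gt1 k unfolding S_def by auto
        then show False using p by auto
      qed
      then have "nI infs z (Ik k) = 1" "na infs z (Ik k) (z ! k) = 1"
        using napos na_le[of "Ik k" "z ! k"] by auto
      then show "f p = 1" unfolding f_def k by simp
    qed
  qed
  also have "\<dots> = (\<Prod>I\<in>S. \<Prod>a\<in>A I. f (I, a))"
  proof -
    have "S \<subseteq> Ik ` {..<n}"
    proof
      fix I assume "I \<in> S"
      then have c: "card {k. k < length z \<and> Ik k = I} > 1" unfolding S_def nI_eq by simp
      have "{k. k < length z \<and> Ik k = I} \<noteq> {}"
      proof
        assume e: "{k. k < length z \<and> Ik k = I} = {}"
        have "card {k. k < length z \<and> Ik k = I} = 0" unfolding e by simp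
        then show False using c by linarith
      qed
      then show "I \<in> Ik ` {..<n}" unfolding n_def by auto
    qed
    then have finS: "finite S" by (rule finite_subset) simp
    have finA: "\<forall>I\<in>S. finite (A I)" unfolding A_def using finite_acts[OF gt] by auto
    show ?thesis using prod.Sigma[OF finS finA, of "\<lambda>I a. f (I, a)"] by simp
  qed
  also have "\<dots> = alpha H infs z"
    unfolding alpha_def S_def A_def f_def by (simp only: fst_conv snd_conv)
  finally show ?thesis unfolding n_def by simp
qed

lemma sz_strategy: "\<exists>\<sigma>\<in>strategies H infs. reach infs \<sigma> z = (\<Prod>k<length z. qq k)"
proof -
  define vis where "vis I = (\<exists>k<length z. Ik k = I)" for I
  define \<sigma> where "\<sigma> I a = (if vis I then real (na infs z I a) / real (nI infs z I)
     else (if a = (SOME a. \<exists>h\<in>nonterminals H. infs h = I \<and> a \<in> acts H h) then 1 else 0))" for I a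
  have "\<sigma> \<in> strategies H infs"
    unfolding strategies_def
  proof (intro CollectI ballI conjI)
    fix h assume h: "h \<in> nonterminals H"
    show "0 \<le> \<sigma> (infs h) a" if "a \<in> acts H h" for a unfolding \<sigma>_def by auto
    show "(\<Sum>a\<in>acts H h. \<sigma> (infs h) a) = 1"
    proof (cases "vis (infs h)")
      case True
      then obtain k where k: "k < length z" "Ik k = infs h" unfolding vis_def by auto
      define KI where "KI = {j. j < length z \<and> Ik j = infs h}"
      have finKI: "finite KI" unfolding KI_def by simp
      have aeq: "acts H h = acts H (take k z)" using acts_same[OF k(1) h] k by simp
      have sub: "(\<lambda>j. z ! j) ` KI \<subseteq> acts H h"
      proof
        fix a assume "a \<in> (\<lambda>j. z ! j) ` KI"
        then obtain j where j: "j \<in> KI" "a = z ! j" by auto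
        then have "j < length z" "Ik j = infs h" unfolding KI_def by auto
        then have "acts H h = acts H (take j z)" using acts_same[OF _ h] by simp
        then show "a \<in> acts H h" using ak_acts[OF \<open>j < length z\<close>] j by simp
      qed
      have "real (nI infs z (infs h)) = (\<Sum>j\<in>KI. 1)" unfolding nI_eq KI_def by simp
      also have "\<dots> = (\<Sum>a\<in>(\<lambda>j. z ! j) ` KI. \<Sum>j\<in>{j. j \<in> KI \<and> z ! j = a}. 1)"
        by (rule sum.image_gen[OF finKI])
      also have "\<dots> = (\<Sum>a\<in>acts H h. \<Sum>j\<in>{j. j \<in> KI \<and> z ! j = a}. 1)"
        by (rule sum.mono_neutral_left[OF finite_acts[OF gt] sub]) (auto simp: card_eq_0_iff)
      also have "\<dots> = (\<Sum>a\<in>acts H h. real (na infs z (infs h) a))"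
        unfolding na_eq KI_def by (intro sum.cong) (auto intro: arg_cong[where f=card])
      finally have e: "(\<Sum>a\<in>acts H h. real (na infs z (infs h) a)) = real (nI infs z (infs h))" by simp
      have "nI infs z (infs h) \<ge> 1" using na_le[of "infs h" "z ! k"] na_pos[OF k(1)] k by simp
      then show ?thesis using True e unfolding \<sigma>_def by (simp add: sum_divide_distrib[symmetric])
    next
      case False
      have "acts H h \<noteq> {}" using h unfolding nonterminals_def leaves_def by auto
      then obtain b where "b \<in> acts H h" by auto
      then have "\<exists>a. \<exists>h'\<in>nonterminals H. infs h' = infs h \<and> a \<in> acts H h'" using h by blast
      then obtain h' where h': "h' \<in> nonterminals H" "infs h' = infs h"
          "(SOME a. \<exists>g\<in>nonterminals H. infs g = infs h \<and> a \<in> acts H g) \<in> acts H h'"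
        using someI_ex[OF \<open>\<exists>a. \<exists>h'\<in>nonterminals H. infs h' = infs h \<and> a \<in> acts H h'\<close>] by blast
      have "acts H h' = acts H h" using ip h h' unfolding infoset_partition_def by blast
      then show ?thesis using False h' unfolding \<sigma>_def by (simp add: finite_acts[OF gt])
    qed
  qed
  moreover have "reach infs \<sigma> z = (\<Prod>k<length z. qq k)"
    unfolding reach_def
    by (rule prod.cong[OF refl]) (auto simp: \<sigma>_def vis_def qq_def Ik_def)
  ultimately show ?thesis by blast
qed

lemma T_le:
  assumes st: "\<sigma> \<in> strategies H infs" and k: "k < length z"
  shows "(\<Sum>j\<in>{j\<in>{..<length z}. Ik j = Ik k}. \<sigma> (Ik j) (z ! j) / real (na infs z (Ik j) (z ! j))) \<le> 1"
proof -
  define I where "I = Ik k"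
  define KI where "KI = {j\<in>{..<length z}. Ik j = I}"
  have finKI: "finite KI" unfolding KI_def by simp
  have "(\<Sum>j\<in>KI. \<sigma> (Ik j) (z ! j) / real (na infs z (Ik j) (z ! j)))
      = (\<Sum>j\<in>KI. \<sigma> I (z ! j) / real (card {j'\<in>KI. z ! j' = z ! j}))"
    by (rule sum.cong[OF refl]) (auto simp: KI_def na_eq intro!: arg_cong[where f=card])
  also have "\<dots> = (\<Sum>a\<in>(\<lambda>j. z ! j) ` KI. \<sigma> I a)"
    by (rule sum_group_div[OF finKI])
  also have "\<dots> \<le> (\<Sum>a\<in>acts H (take k z). \<sigma> I a)"
  proof (rule sum_mono2[OF finite_acts[OF gt]])
    show "(\<lambda>j. z ! j) ` KI \<subseteq> acts H (take k z)"
    proof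
      fix a assume "a \<in> (\<lambda>j. z ! j) ` KI"
      then obtain j where j: "j < length z" "Ik j = I" "a = z ! j" unfolding KI_def by auto
      have "acts H (take j z) = acts H (take k z)"
        using acts_same[OF k tk_nt[OF j(1)]] j unfolding I_def Ik_def by simp
      then show "a \<in> acts H (take k z)" using ak_acts[OF j(1)] j by simp
    qed
    show "0 \<le> \<sigma> I a" if "a \<in> acts H (take k z) - (\<lambda>j. z ! j) ` KI" for a
      using st tk_nt[OF k] that unfolding strategies_def I_def Ik_def by auto
  qed
  also have "\<dots> = 1" using st tk_nt[OF k] unfolding strategies_def I_def Ik_def by auto
  finally show ?thesis unfolding KI_def I_def .
qed

lemma reach_le:
  assumes st: "\<sigma> \<in> strategies H infs"
  shows "reach infs \<sigma> z \<le> (\<Prod>k<length z. qq k)"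
proof -
  define n where "n = length z"
  define s where "s k = \<sigma> (Ik k) (z ! k)" for k
  have reach_s: "reach infs \<sigma> z = (\<Prod>k<n. s k)" unfolding reach_def s_def Ik_def n_def by simp
  have s_nn: "s k \<ge> 0" if "k < n" for k
    using st tk_nt[of k] ak_acts[of k] that unfolding strategies_def s_def Ik_def n_def by auto
  show ?thesis
  proof (cases "\<exists>k<n. s k = 0")
    case True
    then have "reach infs \<sigma> z = 0" unfolding reach_s by auto
    then show ?thesis using prod_qq_pos by simp
  next
    case False
    then have spos: "s k > 0" if "k < n" for k using s_nn[OF that] that by force
    have key: "(\<Sum>k<n. s k / qq k) \<le> real n"
    proof -
      have "(\<Sum>k<n. s k / qq k) = (\<Sum>j<n. s j / real (na infs z (Ik j) (z ! j)) * real (nI infs z (Ik j)))"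
        by (rule sum.cong[OF refl]) (simp add: qq_def)
      also have "\<dots> = (\<Sum>j<n. \<Sum>k<n. if Ik j = Ik k then s j / real (na infs z (Ik j) (z ! j)) else 0)"
      proof (rule sum.cong[OF refl])
        fix j assume "j \<in> {..<n}"
        have "(\<Sum>k<n. if Ik j = Ik k then s j / real (na infs z (Ik j) (z ! j)) else 0)
            = real (card {k\<in>{..<n}. Ik j = Ik k}) * (s j / real (na infs z (Ik j) (z ! j)))"
        proof -
          have "(\<Sum>k<n. if Ik j = Ik k then s j / real (na infs z (Ik j) (z ! j)) else 0)
             = (\<Sum>k\<in>{k\<in>{..<n}. Ik j = Ik k}. s j / real (na infs z (Ik j) (z ! j)))"
            by (rule sum.inter_filter[symmetric]) simp
          then show ?thesis by (simp only: sum_constant)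
        qed
        also have "card {k\<in>{..<n}. Ik j = Ik k} = nI infs z (Ik j)"
          unfolding nI_eq n_def by (rule arg_cong[where f=card]) auto
        finally show "s j / real (na infs z (Ik j) (z ! j)) * real (nI infs z (Ik j))
            = (\<Sum>k<n. if Ik j = Ik k then s j / real (na infs z (Ik j) (z ! j)) else 0)" by simp
      qed
      also have "\<dots> = (\<Sum>k<n. \<Sum>j<n. if Ik j = Ik k then s j / real (na infs z (Ik j) (z ! j)) else 0)"
        by (rule sum.swap)
      also have "\<dots> = (\<Sum>k<n. \<Sum>j\<in>{j\<in>{..<n}. Ik j = Ik k}. s j / real (na infs z (Ik j) (z ! j)))"
        by (rule sum.cong[OF refl], rule sum.inter_filter[symmetric]) simp
      also have "\<dots> \<le> (\<Sum>k<n. 1)"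
        by (rule sum_mono) (use T_le[OF st] in \<open>simp add: s_def n_def\<close>)
      finally show ?thesis by simp
    qed
    have "ln (\<Prod>k<n. s k / qq k) = (\<Sum>k<n. ln (s k / qq k))"
    proof (rule ln_prod)
      fix i assume "i \<in> {..<n}"
      then have "s i > 0" "qq i > 0" using spos qq_pos by (auto simp: n_def)
      then show "s i / qq i \<noteq> 0" by simp
    qed simp
    also have "\<dots> \<le> (\<Sum>k<n. s k / qq k - 1)"
      by (rule sum_mono, rule ln_le_minus_one) (use spos qq_pos in \<open>auto simp: n_def\<close>)
    also have "\<dots> \<le> 0" using key by (simp add: sum_subtractf)
    finally have "ln (\<Prod>k<n. s k / qq k) \<le> 0" .
    moreover have ppos: "(\<Prod>k<n. s k / qq k) > 0"
      by (rule prod_pos) (use spos qq_pos in \<open>auto simp: n_def\<close>)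
    ultimately have le1: "(\<Prod>k<n. s k / qq k) \<le> 1" by simp
    have "(\<Prod>k<n. s k) = (\<Prod>k<n. s k / qq k) * (\<Prod>k<n. qq k)"
    proof -
      have "(\<Prod>k<n. s k) = (\<Prod>k<n. s k / qq k * qq k)"
      proof (rule prod.cong[OF refl])
        fix k assume "k \<in> {..<n}"
        then have "qq k > 0" using qq_pos by (simp add: n_def)
        then show "s k = s k / qq k * qq k" by simp
      qed
      also have "\<dots> = (\<Prod>k<n. s k / qq k) * (\<Prod>k<n. qq k)" by (rule prod.distrib)
      finally show ?thesis .
    qed
    also have "\<dots> \<le> 1 * (\<Prod>k<n. qq k)"
      by (rule mult_right_mono[OF le1]) (use prod_qq_pos in \<open>simp add: n_def less_imp_le\<close>)
    finally show ?thesis unfolding reach_s n_def by simp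
  qed
qed

end



lemma alpha_facts:
  assumes gt: "game_tree H" and ip: "infoset_partition H infs" and zH: "z \<in> H"
  shows "alpha H infs z > 0"
    "\<exists>\<sigma>\<in>strategies H infs. reach infs \<sigma> z = alpha H infs z"
    "\<And>\<sigma>. \<sigma> \<in> strategies H infs \<Longrightarrow> reach infs \<sigma> z \<le> alpha H infs z"
  using alpha_eq[OF gt ip zH] prod_qq_pos[OF gt ip zH] sz_strategy[OF gt ip zH] reach_le[OF gt ip zH]
  by auto

theorem corollary3:
  fixes H :: "'a list set" and infs :: "'a list \<Rightarrow> 'i"
  assumes "game_tree H" and "infoset_partition H infs"
  shows "(SUP u\<in>{u. (\<forall>z\<in>leaves H. u z \<ge> 0) \<and> opt_val H infs u > 0}.
            ereal (opt_val H (pr1 infs) u / opt_val H infs u))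
         = ereal (Max ((\<lambda>z. 1 / alpha H infs z) ` leaves H))"
proof -
  note gt = assms(1) and ip = assms(2)
  define L where "L = leaves H"
  have finL: "finite L" and neL: "L \<noteq> {}" unfolding L_def
    using finite_leaves[OF gt] leaves_nonempty[OF gt] by auto
  have LH: "z \<in> H" if "z \<in> L" for z using that unfolding L_def leaves_def by auto
  define Mx where "Mx = Max ((\<lambda>z. 1 / alpha H infs z) ` L)"
  define U where "U = {u. (\<forall>z\<in>leaves H. u z \<ge> 0) \<and> opt_val H infs u > 0}"
  have "(SUP u\<in>U. ereal (opt_val H (pr1 infs) u / opt_val H infs u)) = ereal Mx"
  proof (rule antisym)
    show "(SUP u\<in>U. ereal (opt_val H (pr1 infs) u / opt_val H infs u)) \<le> ereal Mx"
    proof (rule SUP_least)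
      fix u assume "u \<in> U"
      then have u0: "\<forall>z\<in>L. u z \<ge> 0" and opos: "opt_val H infs u > 0" unfolding U_def L_def by auto
      define M where "M = Max (u ` L)"
      have "M \<in> u ` L" unfolding M_def using finL neL by (intro Max_in) auto
      then obtain zs where zs: "zs \<in> L" "u zs = M" by auto
      have uM: "\<forall>z\<in>L. u z \<le> M" unfolding M_def using finL by auto
      obtain \<sigma>s where \<sigma>s: "\<sigma>s \<in> strategies H infs" "reach infs \<sigma>s zs = alpha H infs zs"
        using alpha_facts(2)[OF gt ip LH[OF zs(1)]] by auto
      have apos: "alpha H infs zs > 0" using alpha_facts(1)[OF gt ip LH[OF zs(1)]] .
      obtain \<sigma>p where \<sigma>p: "\<sigma>p \<in> strategies H (pr1 infs)"
        using path_strategy[OF gt LH[OF zs(1)]] by auto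
      have o1: "alpha H infs zs * M \<le> opt_val H infs u"
        using opt_ge[OF gt \<sigma>s(1), of u zs] u0 zs \<sigma>s(2) unfolding L_def by simp
      have o2: "opt_val H (pr1 infs) u \<le> M" using opt_le[OF gt \<sigma>p, of u M] uM unfolding L_def by simp
      have o3: "opt_val H infs u \<le> M" using opt_le[OF gt \<sigma>s(1), of u M] uM unfolding L_def by simp
      have Mpos: "M > 0" using o3 opos by linarith
      have "opt_val H (pr1 infs) u / opt_val H infs u \<le> M / opt_val H infs u"
        using o2 opos by (simp add: divide_right_mono)
      also have "\<dots> \<le> M / (alpha H infs zs * M)"
        using o1 Mpos apos opos by (intro divide_left_mono) auto
      also have "\<dots> = 1 / alpha H infs zs" using Mpos by simp
      also have "\<dots> \<le> Mx" unfolding Mx_def using finL zs(1) by (intro Max_ge) auto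
      finally show "ereal (opt_val H (pr1 infs) u / opt_val H infs u) \<le> ereal Mx" by simp
    qed
  next
    have "Mx \<in> (\<lambda>z. 1 / alpha H infs z) ` L" unfolding Mx_def using finL neL by (intro Max_in) auto
    then obtain z0 where z0: "z0 \<in> L" "Mx = 1 / alpha H infs z0" by auto
    define u0 where "u0 x = (if x = z0 then 1 else (0::real))" for x
    obtain \<sigma>0 where \<sigma>0: "\<sigma>0 \<in> strategies H infs" "reach infs \<sigma>0 z0 = alpha H infs z0"
      using alpha_facts(2)[OF gt ip LH[OF z0(1)]] by auto
    have apos: "alpha H infs z0 > 0" using alpha_facts(1)[OF gt ip LH[OF z0(1)]] .
    obtain \<sigma>p where \<sigma>p: "\<sigma>p \<in> strategies H (pr1 infs)" "reach (pr1 infs) \<sigma>p z0 = 1"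
      using path_strategy[OF gt LH[OF z0(1)]] by auto
    have u0nn: "\<forall>z\<in>leaves H. u0 z \<ge> 0" unfolding u0_def by auto
    have o1: "alpha H infs z0 \<le> opt_val H infs u0"
      using opt_ge[OF gt \<sigma>0(1) u0nn, of z0] z0 \<sigma>0(2) unfolding L_def u0_def by simp
    have eu: "exp_util H lab u0 \<sigma> = reach lab \<sigma> z0" for lab :: "'a list \<Rightarrow> 'i" and \<sigma>
    proof -
      have "exp_util H lab u0 \<sigma> = (\<Sum>z\<in>leaves H. if z = z0 then reach lab \<sigma> z else 0)"
        unfolding exp_util_def u0_def by (rule sum.cong) auto
      also have "\<dots> = reach lab \<sigma> z0" using z0(1) unfolding L_def by (simp add: sum.delta' finite_leaves[OF gt])
      finally show ?thesis .
    qed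
    have o2: "opt_val H infs u0 \<le> alpha H infs z0"
      unfolding opt_val_def
      by (rule cSUP_least) (use \<sigma>0(1) eu alpha_facts(3)[OF gt ip LH[OF z0(1)]] in auto)
    have o3: "1 \<le> opt_val H (pr1 infs) u0"
      using opt_ge[OF gt \<sigma>p(1) u0nn, of z0] z0 \<sigma>p(2) unfolding L_def u0_def by simp
    have opos: "opt_val H infs u0 > 0" using o1 apos by linarith
    have u0U: "u0 \<in> U" unfolding U_def using u0nn opos by auto
    have "Mx \<le> 1 / opt_val H infs u0" unfolding z0(2)
      using o2 opos by (intro divide_left_mono) auto
    also have "\<dots> \<le> opt_val H (pr1 infs) u0 / opt_val H infs u0"
      using o3 opos by (intro divide_right_mono) auto
    finally have "ereal Mx \<le> ereal (opt_val H (pr1 infs) u0 / opt_val H infs u0)" by simp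
    also have "\<dots> \<le> (SUP u\<in>U. ereal (opt_val H (pr1 infs) u / opt_val H infs u))"
      by (rule SUP_upper[OF u0U])
    finally show "ereal Mx \<le> (SUP u\<in>U. ereal (opt_val H (pr1 infs) u / opt_val H infs u))" .
  qed
  then show ?thesis unfolding U_def Mx_def L_def .
qed

end
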